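(* Let $t$ have a persistent craving representation $(\rhd,\nu,\phi)$ and let $x\in X$. Then $$\nu_{X\setminus\{x\}}(\succ_x)=\frac{\nu(\succ_x)}{1-\phi(M(\rhd,X\setminus\{x\}),x)\,(1-\nu(\succ_x))}.$$
   Context: $X$ is a finite set with at least two elements, $\mathcal{L}(X)$ its linear orders, $M(\succ,A)$ the $\succ$-maximal element of $A$. Given a linear order $\rhd$, the craving preferences $\{\succ_x\}_{x\in X}$ are: $x\succ_x y$ for all $y\ne x$, and for $y,z\ne x$, $y\succ_x z$ iff $y\rhd z$. A distribution $\nu$ supported on $\{\succ_x\}$ is craving monotonic w.r.t. $\rhd$ if $x\rhd y$ implies $\nu(\succ_x)>\nu(\succ_y)>0$. A persistence function is $\phi:X^2\to[0,1)$ with $\phi(x,x)=0$, $\phi(x,y)>0$ for $x\ne y$. A persistent craving representation $(\rhd,\nu,\phi)$, with $\nu$ craving monotonic, is the transition function $t(x,\succ_y)=\phi(x,y)\delta_{\succ_y}+(1-\phi(x,y))\nu$ and $t(x,\succ)=\nu$ for $\succ$ outside the support of $\nu$. For nonempty $A\subseteq X$, $\nu_A$ is the unique stationary distribution of the Markov chain on $\mathcal{L}(X)$ with $m_A(\succ,\succ')=t_{\succ'}(M(\succ,A),\succ)$. *)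

theory Defs
  imports Complex_Main
begin

text \<open>Linear orders on X, as strict total orders (relations) on X.
  (x,y) \<in> r means x is r-better than y.\<close>
definition linorders :: "'a set \<Rightarrow> 'a rel set" where
  "linorders X = {r. r \<subseteq> X \<times> X \<and> strict_linear_order_on X r}"

definition maxel :: "'a rel \<Rightarrow> 'a set \<Rightarrow> 'a" where
  "maxel r A = (THE a. a \<in> A \<and> (\<forall>b\<in>A. b \<noteq> a \<longrightarrow> (a, b) \<in> r))"

definition crave :: "'a set \<Rightarrow> 'a rel \<Rightarrow> 'a \<Rightarrow> 'a rel" where
  "crave X rhd x = {(y, z). y \<in> X \<and> z \<in> X \<and> y \<noteq> z \<and>
      (y = x \<or> (z \<noteq> x \<and> (y, z) \<in> rhd))}"

definition is_dist :: "'s set \<Rightarrow> ('s \<Rightarrow> real) \<Rightarrow> bool" where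
  "is_dist S p \<longleftrightarrow> (\<forall>s\<in>S. p s \<ge> 0) \<and> (\<Sum>s\<in>S. p s) = 1"

definition craving_monotonic :: "'a set \<Rightarrow> 'a rel \<Rightarrow> ('a rel \<Rightarrow> real) \<Rightarrow> bool" where
  "craving_monotonic X rhd nu \<longleftrightarrow>
     is_dist (linorders X) nu \<and>
     (\<forall>r\<in>linorders X. r \<notin> crave X rhd ` X \<longrightarrow> nu r = 0) \<and>
     (\<forall>x\<in>X. \<forall>y\<in>X. (x, y) \<in> rhd \<longrightarrow>
        nu (crave X rhd x) > nu (crave X rhd y) \<and> nu (crave X rhd y) > 0)"

definition persistence :: "'a set \<Rightarrow> ('a \<Rightarrow> 'a \<Rightarrow> real) \<Rightarrow> bool" where
  "persistence X phi \<longleftrightarrow>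
     (\<forall>x\<in>X. \<forall>y\<in>X. 0 \<le> phi x y \<and> phi x y < 1) \<and>
     (\<forall>x\<in>X. phi x x = 0) \<and>
     (\<forall>x\<in>X. \<forall>y\<in>X. x \<noteq> y \<longrightarrow> phi x y > 0)"

text \<open>Transition function of the persistent craving representation:
  trans_fn X rhd nu phi x r r' is the probability t_{r'}(x, r) of the
  preference r' given the chosen alternative x and the current preference r.\<close>
definition trans_fn :: "'a set \<Rightarrow> 'a rel \<Rightarrow> ('a rel \<Rightarrow> real) \<Rightarrow> ('a \<Rightarrow> 'a \<Rightarrow> real)
    \<Rightarrow> 'a \<Rightarrow> 'a rel \<Rightarrow> 'a rel \<Rightarrow> real" where
  "trans_fn X rhd nu phi x r r' =
     (if r \<in> crave X rhd ` X then
        (let y = (THE y. y \<in> X \<and> r = crave X rhd y) in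
           phi x y * (if r' = r then 1 else 0) + (1 - phi x y) * nu r')
      else nu r')"

definition chain_m :: "'a set \<Rightarrow> 'a rel \<Rightarrow> ('a rel \<Rightarrow> real) \<Rightarrow> ('a \<Rightarrow> 'a \<Rightarrow> real)
    \<Rightarrow> 'a set \<Rightarrow> 'a rel \<Rightarrow> 'a rel \<Rightarrow> real" where
  "chain_m X rhd nu phi A r r' = trans_fn X rhd nu phi (maxel r A) r r'"

definition stationary :: "'s set \<Rightarrow> ('s \<Rightarrow> 's \<Rightarrow> real) \<Rightarrow> ('s \<Rightarrow> real) \<Rightarrow> bool" where
  "stationary S m mu \<longleftrightarrow> is_dist S mu \<and>
     (\<forall>s'\<in>S. mu s' = (\<Sum>s\<in>S. mu s * m s s'))"

end

theory Submission
  imports Defs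
begin

lemma lin_props:
  assumes "r \<in> linorders X"
  shows "r \<subseteq> X \<times> X" "trans r" "irrefl r" "total_on X r"
  using assms unfolding linorders_def strict_linear_order_on_def by auto

lemma crave_in:
  assumes "r \<in> linorders X" "y \<in> X"
  shows "crave X r y \<in> linorders X"
proof -
  note p = lin_props[OF assms(1)]
  have "trans (crave X r y)"
    unfolding trans_def crave_def
    using p(2,3) unfolding trans_def irrefl_def by blast
  moreover have "irrefl (crave X r y)" unfolding irrefl_def crave_def by auto
  moreover have "total_on X (crave X r y)"
    using p(4) unfolding total_on_def crave_def by auto
  moreover have "crave X r y \<subseteq> X \<times> X" unfolding crave_def by auto
  ultimately show ?thesis unfolding linorders_def strict_linear_order_on_def by auto
qed

lemma crave_inj:
  assumes "y \<in> X" "z \<in> X" "crave X r y = crave X r z"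
  shows "y = z"
proof (rule ccontr)
  assume "y \<noteq> z"
  then have "(y,z) \<in> crave X r y" using assms unfolding crave_def by auto
  then have "(y,z) \<in> crave X r z" using assms by simp
  then show False using \<open>y \<noteq> z\<close> unfolding crave_def by auto
qed

lemma the_crave:
  assumes "y \<in> X"
  shows "(THE y'. y' \<in> X \<and> crave X r y = crave X r y') = y"
proof (rule the_equality)
  show "y \<in> X \<and> crave X r y = crave X r y" using assms by simp
  fix y' assume "y' \<in> X \<and> crave X r y = crave X r y'"
  then show "y' = y" using crave_inj[of y' X y r] assms by simp
qed

lemma maxel_eq:
  assumes "a \<in> A" "\<forall>b\<in>A. b \<noteq> a \<longrightarrow> (a,b) \<in> r"
    "\<forall>u\<in>A. \<forall>v\<in>A. (u,v) \<in> r \<longrightarrow> (v,u) \<notin> r"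
  shows "maxel r A = a"
  unfolding maxel_def
proof (rule the_equality)
  show "a \<in> A \<and> (\<forall>b\<in>A. b \<noteq> a \<longrightarrow> (a, b) \<in> r)" using assms by blast
  fix a' assume h: "a' \<in> A \<and> (\<forall>b\<in>A. b \<noteq> a' \<longrightarrow> (a', b) \<in> r)"
  show "a' = a"
  proof (rule ccontr)
    assume "a' \<noteq> a"
    then have "(a',a) \<in> r" "(a,a') \<in> r" using h assms(1,2) by auto
    then show False using assms(3) assms(1) h by blast
  qed
qed

lemma max_exists:
  assumes "finite A" "A \<noteq> {}" "trans r" "total_on A r"
  shows "\<exists>a\<in>A. \<forall>b\<in>A. b \<noteq> a \<longrightarrow> (a,b) \<in> r"
  using assms
proof (induction A rule: finite_ne_induct)
  case (singleton x) then show ?case by auto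
next
  case (insert a F)
  have tF: "total_on F r" using insert.prems unfolding total_on_def by auto
  obtain m where m: "m \<in> F" "\<forall>b\<in>F. b \<noteq> m \<longrightarrow> (m,b) \<in> r"
    using insert.IH[OF insert.prems(1) tF] by blast
  have "m \<noteq> a" using m insert.hyps by auto
  then have "(a,m) \<in> r \<or> (m,a) \<in> r" using insert.prems m(1) unfolding total_on_def by auto
  then show ?case
  proof
    assume am: "(a,m) \<in> r"
    have "\<forall>b\<in>insert a F. b \<noteq> a \<longrightarrow> (a,b) \<in> r"
    proof (intro ballI impI)
      fix b assume "b \<in> insert a F" "b \<noteq> a"
      then have "b \<in> F" by auto
      then show "(a,b) \<in> r" using am m insert.prems(1) \<open>m \<noteq> a\<close> by (cases "b = m") (auto dest: transD)
    qed
    then show ?thesis by auto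
  next
    assume "(m,a) \<in> r"
    then show ?thesis using m by auto
  qed
qed

theorem proposition9:
  fixes X :: "'a set" and rhd :: "'a rel" and nu :: "'a rel \<Rightarrow> real"
    and phi :: "'a \<Rightarrow> 'a \<Rightarrow> real" and x :: 'a and mu :: "'a rel \<Rightarrow> real"
  assumes "finite X" and "card X \<ge> 2"
    and "rhd \<in> linorders X"
    and "craving_monotonic X rhd nu"
    and "persistence X phi"
    and "x \<in> X"
    and "stationary (linorders X) (chain_m X rhd nu phi (X - {x})) mu"
  shows "mu (crave X rhd x) =
    nu (crave X rhd x) / (1 - phi (maxel rhd (X - {x})) x * (1 - nu (crave X rhd x)))"
proof -
  define L where "L = linorders X"
  define A where "A = X - {x}"
  define c where "c = crave X rhd x"
  note p = lin_props[OF assms(3)]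
  have finL: "finite L" unfolding L_def linorders_def
  proof (rule finite_subset)
    show "{r. r \<subseteq> X \<times> X \<and> strict_linear_order_on X r} \<subseteq> Pow (X \<times> X)" by auto
    show "finite (Pow (X \<times> X))" using assms(1) by simp
  qed
  have cL: "c \<in> L" unfolding c_def L_def using crave_in[OF assms(3,6)] .
  have "A \<noteq> {}"
  proof
    assume "A = {}"
    then have "X \<subseteq> {x}" unfolding A_def by auto
    then have "card X \<le> 1" using card_mono[of "{x}" X] by auto
    then show False using assms(2) by auto
  qed
  moreover have "finite A" using assms(1) unfolding A_def by auto
  moreover have "total_on A rhd" using p(4) unfolding total_on_def A_def by auto
  ultimately obtain m where m: "m \<in> A" "\<forall>b\<in>A. b \<noteq> m \<longrightarrow> (m,b) \<in> rhd"
    using max_exists[OF _ _ p(2)] by blast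
  have asym: "\<forall>u v. (u,v) \<in> rhd \<longrightarrow> (v,u) \<notin> rhd"
    using p(2,3) unfolding trans_def irrefl_def by blast
  have mr: "maxel rhd A = m" using maxel_eq[OF m] asym by blast
  have mc: "maxel c A = m"
  proof (rule maxel_eq)
    show "m \<in> A" by fact
    show "\<forall>b\<in>A. b \<noteq> m \<longrightarrow> (m, b) \<in> c"
      using m unfolding c_def crave_def A_def by auto
    show "\<forall>u\<in>A. \<forall>v\<in>A. (u, v) \<in> c \<longrightarrow> (v, u) \<notin> c"
      using asym unfolding c_def crave_def A_def by auto
  qed
  define q where "q = phi m x"
  define n where "n = nu c"
  have mX: "m \<in> X" "m \<noteq> x" using m(1) unfolding A_def by auto
  have q: "0 < q" "q < 1" using assms(5) mX assms(6) unfolding persistence_def q_def by auto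
  have n: "0 \<le> n" "n \<le> 1"
  proof -
    have d: "is_dist L nu" using assms(4) unfolding craving_monotonic_def L_def by auto
    then show "0 \<le> n" unfolding n_def is_dist_def using cL by auto
    have "(\<Sum>s\<in>L. nu s) = nu c + (\<Sum>s\<in>L-{c}. nu s)" using sum.remove[OF finL cL] by simp
    moreover have "(\<Sum>s\<in>L-{c}. nu s) \<ge> 0" using d unfolding is_dist_def by (intro sum_nonneg) auto
    ultimately show "n \<le> 1" using d unfolding is_dist_def n_def by auto
  qed
  have st: "mu c = (\<Sum>s\<in>L. mu s * chain_m X rhd nu phi A s c)"
    "(\<Sum>s\<in>L. mu s) = 1"
    using assms(7) cL unfolding stationary_def L_def A_def is_dist_def by auto
  have mcc: "chain_m X rhd nu phi A c c = q + (1 - q) * n"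
  proof -
    have "c \<in> crave X rhd ` X" unfolding c_def using assms(6) by auto
    moreover have "(THE y. y \<in> X \<and> c = crave X rhd y) = x"
      unfolding c_def using the_crave[OF assms(6)] by simp
    ultimately show ?thesis unfolding chain_m_def trans_fn_def mc q_def n_def Let_def by simp
  qed
  have mother: "chain_m X rhd nu phi A s c = n" if "s \<in> L" "s \<noteq> c" for s
  proof (cases "s \<in> crave X rhd ` X")
    case True
    then obtain y where y: "y \<in> X" "s = crave X rhd y" by auto
    have "y \<noteq> x" using y that(2) unfolding c_def by auto
    have th: "(THE y'. y' \<in> X \<and> s = crave X rhd y') = y"
      using the_crave[OF y(1), of rhd] y(2) by simp
    have ms: "maxel s A = y"
    proof (rule maxel_eq)
      show "y \<in> A" using y \<open>y \<noteq> x\<close> unfolding A_def by auto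
      show "\<forall>b\<in>A. b \<noteq> y \<longrightarrow> (y, b) \<in> s"
        using y unfolding crave_def A_def by auto
      show "\<forall>u\<in>A. \<forall>v\<in>A. (u, v) \<in> s \<longrightarrow> (v, u) \<notin> s"
        using asym y unfolding crave_def A_def by auto
    qed
    have "phi y y = 0" using assms(5) y(1) unfolding persistence_def by auto
    then show ?thesis using True th that(2)
      unfolding chain_m_def trans_fn_def ms n_def Let_def by simp
  next
    case False
    then show ?thesis unfolding chain_m_def trans_fn_def n_def by simp
  qed
  have "(\<Sum>s\<in>L. mu s * chain_m X rhd nu phi A s c)
      = mu c * (q + (1 - q) * n) + (\<Sum>s\<in>L-{c}. mu s * n)"
  proof -
    have "(\<Sum>s\<in>L. mu s * chain_m X rhd nu phi A s c)
       = mu c * chain_m X rhd nu phi A c c + (\<Sum>s\<in>L-{c}. mu s * chain_m X rhd nu phi A s c)"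
      by (rule sum.remove[OF finL cL])
    also have "(\<Sum>s\<in>L-{c}. mu s * chain_m X rhd nu phi A s c) = (\<Sum>s\<in>L-{c}. mu s * n)"
      by (rule sum.cong) (auto simp: mother)
    finally show ?thesis using mcc by simp
  qed
  also have "(\<Sum>s\<in>L-{c}. mu s * n) = n * (\<Sum>s\<in>L-{c}. mu s)"
    by (simp add: sum_distrib_left mult.commute)
  also have "(\<Sum>s\<in>L-{c}. mu s) = 1 - mu c"
    using sum.remove[OF finL cL, of mu] st(2) by linarith
  finally have eq: "mu c = mu c * (q + (1 - q) * n) + n * (1 - mu c)" using st(1) by linarith
  have pos: "1 - q * (1 - n) > 0"
  proof -
    have "q * (1 - n) \<le> q * 1" using q n by (intro mult_left_mono) auto
    then show ?thesis using q by linarith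
  qed
  have e1: "mu c * (1 - q * (1 - n)) = mu c - mu c * q + mu c * q * n"
    by (simp add: right_diff_distrib)
  have e2: "mu c * (q + (1 - q) * n) + n * (1 - mu c) = mu c * q + mu c * n - mu c * q * n + n - n * mu c"
    by (simp add: distrib_left left_diff_distrib right_diff_distrib)
  have "mu c * (1 - q * (1 - n)) = n" using eq e1 e2 by (simp add: mult.commute)
  then have "mu c = n / (1 - q * (1 - n))" using pos by (simp add: eq_divide_eq)
  then show ?thesis unfolding c_def n_def q_def A_def[symmetric] mr .
qed

end
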